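(* Let $\{\mu_t\}$ be a free convolution semigroup as described in the context. Any martingale polynomial for $\{\mu_t\}$ is a (finite) linear combination, with complex coefficients, of the elements of the standard Sheffer system for $\{\mu_t\}$.
   Context: Let $\mu$ be a freely infinitely divisible probability measure on $\mathbb R$ with finite moments of all orders, and $\{\mu_t\}_{t\ge0}$ the free convolution semigroup with $\mu_0=\delta_0$, $\mu_1=\mu$, $R_{\mu_t}=tR_\mu$. Write $G_t(z)=\sum_n\langle\mu_t,x^n\rangle z^{-(n+1)}$ (Cauchy transform, formal series in $z^{-1}$), $K_t$ its compositional inverse, $K_t(z)=\frac1z+t\sum_{n\ge1}r_nz^{n-1}$ with $r_n$ the free cumulants of $\mu$, and $F_{s,t}=K_s\circ G_t$. Let $\mathrm{Res}_z(x)=\frac{1}{z-x}=\sum_{n\ge0}x^nz^{-(n+1)}$. For $s\le t$, $\mathcal K_{s,t}$ is the linear operator on $\mathbb C[x]$ determined (coefficientwise in the formal expansion in $z^{-1}$) by $\mathcal K_{s,t}(\mathrm{Res}_z)=\mathrm{Res}_{F_{s,t}(z)}$; these are the transition operators of the free Lévy process with distributions $\mu_t$, i.e. $\mathbb E_s[f(X(t))]=(\mathcal K_{s,t}f)(X(s))$. A martingale polynomial for $\{\mu_t\}$ is a function $p(x,t)$, polynomial in $x$ for each $t$, with $\mathcal K_{s,t}(p(\cdot,t))=p(\cdot,s)$ for all $s<t$. The standard Sheffer system for $\{\mu_t\}$ is the family $\{Q_n(x,t)\}_{n\ge0}$ defined by $\frac{1}{z(K_t(z)-x)}=\sum_{n\ge0}Q_n(x,t)z^n$;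 $Q_n$ is monic of degree $n$ in $x$. *)

theory Defs
  imports "HOL-Probability.Probability" "HOL-Computational_Algebra.Polynomial"
    "HOL-Computational_Algebra.Formal_Power_Series"
begin

text \<open>All formal series in z^{-1} are written as formal power series in w = z^{-1}.\<close>

definition mom :: "real measure \<Rightarrow> nat \<Rightarrow> complex" where
  "mom M n = complex_of_real (integral\<^sup>L M (\<lambda>x. x ^ n))"

text \<open>Cauchy transform G_M(z) = sum_n m_n z^{-(n+1)}, written as a power series in w = 1/z:
  cauchy_fps M = sum_n m_n w^(n+1).\<close>
definition cauchy_fps :: "real measure \<Rightarrow> complex fps" where
  "cauchy_fps M = fps_X * Abs_fps (mom M)"

text \<open>K_M is the compositional inverse of G_M. In the variable w = 1/z this means
  1 / K_M(zeta) = fps_inv (cauchy_fps M) (zeta).  zK_fps M is the power series zeta * K_M(zeta).\<close>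
definition zK_fps :: "real measure \<Rightarrow> complex fps" where
  "zK_fps M = fps_X / fps_inv (cauchy_fps M)"

text \<open>Free cumulants: K_M(z) = 1/z + sum_{n>=1} r_n z^(n-1), i.e. z K_M(z) = 1 + sum r_n z^n.\<close>
definition free_cumulant :: "real measure \<Rightarrow> nat \<Rightarrow> complex" where
  "free_cumulant M n = fps_nth (zK_fps M) n"

definition prob_with_moments :: "real measure \<Rightarrow> bool" where
  "prob_with_moments M \<longleftrightarrow> prob_space M \<and> sets M = sets borel \<and>
     (\<forall>n::nat. integrable M (\<lambda>x. x ^ n))"

text \<open>{mu t}_{t>=0} is the free convolution semigroup of mu = mu 1:
  mu 0 = delta_0, and R_{mu_t} = t R_mu, i.e. the free cumulants of mu t are t times those of mu.\<close>
definition free_conv_semigroup :: "(real \<Rightarrow> real measure) \<Rightarrow> bool" where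
  "free_conv_semigroup mu \<longleftrightarrow>
     (\<forall>t\<ge>0. prob_with_moments (mu t)) \<and> mu 0 = return borel 0 \<and>
     (\<forall>t\<ge>0. \<forall>n\<ge>1. free_cumulant (mu t) n = complex_of_real t * free_cumulant (mu 1) n)"

text \<open>u_{s,t}(w) = 1 / F_{s,t}(1/w) where F_{s,t} = K_s o G_t.
  Since K_s(zeta) = (zeta K_s(zeta)) / zeta, we get u = G_t / ((zK_s) o G_t).\<close>
definition u_fps :: "(real \<Rightarrow> real measure) \<Rightarrow> real \<Rightarrow> real \<Rightarrow> complex fps" where
  "u_fps mu s t = cauchy_fps (mu t) * inverse (zK_fps (mu s) oo cauchy_fps (mu t))"

text \<open>K_{s,t}(Res_z) = Res_{F_{s,t}(z)}:  sum_k K_{s,t}(x^k) w^(k+1) = sum_n x^n u(w)^(n+1).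
  Comparing coefficients of w^(k+1) (only n <= k contribute, as u = w + O(w^2)):\<close>
definition Kmon :: "(real \<Rightarrow> real measure) \<Rightarrow> real \<Rightarrow> real \<Rightarrow> nat \<Rightarrow> complex poly" where
  "Kmon mu s t k = (\<Sum>n\<le>k. monom (fps_nth (u_fps mu s t ^ (n + 1)) (k + 1)) n)"

definition Kop :: "(real \<Rightarrow> real measure) \<Rightarrow> real \<Rightarrow> real \<Rightarrow> complex poly \<Rightarrow> complex poly" where
  "Kop mu s t p = (\<Sum>k\<le>degree p. smult (coeff p k) (Kmon mu s t k))"

definition martingale_poly :: "(real \<Rightarrow> real measure) \<Rightarrow> (real \<Rightarrow> complex poly) \<Rightarrow> bool" where
  "martingale_poly mu p \<longleftrightarrow> (\<forall>s t. 0 \<le> s \<longrightarrow> s < t \<longrightarrow> Kop mu s t (p t) = p s)"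

text \<open>Standard Sheffer system: 1/(z(K_t(z) - x)) = sum_n Q_n(x,t) z^n, i.e.
  Q_n(x,t) is the n-th coefficient of inverse (zK_t(z) - x z).\<close>
definition sheffer_Q :: "(real \<Rightarrow> real measure) \<Rightarrow> nat \<Rightarrow> complex \<Rightarrow> real \<Rightarrow> complex" where
  "sheffer_Q mu n x t = fps_nth (inverse (zK_fps (mu t) - fps_const x * fps_X)) n"

end

theory Submission
  imports Defs
begin

definition Lin :: "(nat \<Rightarrow> 'a::comm_ring_1 poly) \<Rightarrow> 'a poly \<Rightarrow> 'a poly" where
  "Lin f r = (\<Sum>k\<le>degree r. smult (coeff r k) (f k))"

lemma Lin_bound: "degree r \<le> M \<Longrightarrow> Lin f r = (\<Sum>k\<le>M. smult (coeff r k) (f k))"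
  unfolding Lin_def
  by (rule sum.mono_neutral_left) (auto simp: coeff_eq_0)

lemma Lin_add: "Lin f (r1 + r2) = Lin f r1 + Lin f r2"
proof -
  let ?M = "max (degree r1) (degree r2)"
  have "degree (r1 + r2) \<le> ?M" by (rule degree_add_le) auto
  then show ?thesis
    by (simp add: Lin_bound[of _ ?M] smult_add_left sum.distrib)
qed

lemma smult_sum_right: "smult c (sum f S) = (\<Sum>i\<in>S. smult c (f i))"
  by (induction S rule: infinite_finite_induct) (auto simp: smult_add_right)

lemma Lin_smult: "Lin f (smult c r) = smult c (Lin f r)"
  by (simp add: Lin_bound[OF degree_smult_le] Lin_def[of f r] smult_sum_right smult_smult)

lemma Lin_zero[simp]: "Lin f 0 = 0"
  by (simp add: Lin_def)

lemma Lin_sum: "Lin f (sum g S) = (\<Sum>i\<in>S. Lin f (g i))"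
  by (induction S rule: infinite_finite_induct) (auto simp: Lin_add)

lemma Lin_monom: "Lin f (monom c k) = smult c (f k)"
proof -
  have "Lin f (monom c k) = (\<Sum>i\<le>k. smult (if k = i then c else 0) (f i))"
    by (simp add: Lin_bound[OF degree_monom_le] coeff_monom)
  also have "\<dots> = (\<Sum>i\<le>k. if k = i then smult c (f i) else 0)"
    by (rule sum.cong) auto
  also have "\<dots> = smult c (f k)" by simp
  finally show ?thesis .
qed

lemma Lin_comp: "Lin g (Lin f q) = Lin (\<lambda>k. Lin g (f k)) q"
  by (simp add: Lin_def[of f] Lin_sum Lin_smult) (simp add: Lin_def)

lemma Lin_id: "Lin (\<lambda>k. monom 1 k) r = r"
  by (simp add: Lin_def smult_monom poly_as_sum_of_monoms)

lemma Lin_cong: "(\<And>k. f k = g k) \<Longrightarrow> Lin f r = Lin g r"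
  by (simp add: Lin_def)

definition Kp :: "complex fps \<Rightarrow> nat \<Rightarrow> complex poly" where
  "Kp G k = (\<Sum>n\<le>k. monom (fps_nth (G ^ (n + 1)) (k + 1)) n)"

definition Qp :: "complex fps \<Rightarrow> nat \<Rightarrow> complex poly" where
  "Qp G n = (\<Sum>j\<le>n. monom (fps_nth (fps_inv G ^ (j + 1)) (n + 1)) j)"

lemma fps_inv_0: "fps_nth (fps_inv G) 0 = 0"
  by (simp add: fps_inv_def)

lemma fps_inv_1: "fps_nth G 0 = 0 \<Longrightarrow> fps_nth G 1 = 1 \<Longrightarrow> fps_nth (fps_inv G) 1 = 1"
  by (simp add: fps_inv_def)

lemma coeff_Qp: "coeff (Qp G n) j = fps_nth (fps_inv G ^ (j + 1)) (n + 1)"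
proof -
  have "coeff (Qp G n) j = (\<Sum>i\<le>n. if i = j then fps_nth (fps_inv G ^ (i + 1)) (n + 1) else 0)"
    by (simp add: Qp_def coeff_sum coeff_monom)
  also have "\<dots> = fps_nth (fps_inv G ^ (j + 1)) (n + 1)"
  proof (cases "j \<le> n")
    case False
    then show ?thesis using startsby_zero_power_prefix[OF fps_inv_0[of G], of "j+1"] by auto
  qed simp
  finally show ?thesis .
qed

lemma core:
  assumes G0: "fps_nth G 0 = 0" and G1: "fps_nth G 1 \<noteq> 0"
  shows "(\<Sum>n\<le>k. fps_nth (G ^ (n + 1)) (k + 1) * fps_nth (fps_inv G ^ (j + 1)) (n + 1)) = (if j = k then 1 else 0)"
proof -
  let ?V = "fps_inv G"
  have "?V ^ (j+1) oo G = (?V oo G) ^ (j+1)" by (rule fps_compose_power[OF G0, symmetric])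
  also have "\<dots> = fps_X ^ (j+1)" using fps_inv[OF G0 G1] by simp
  finally have e: "?V ^ (j+1) oo G = fps_X ^ (j+1)" .
  have "fps_nth (?V ^ (j+1) oo G) (k+1) = (\<Sum>i=0..k+1. fps_nth (?V ^ (j+1)) i * fps_nth (G ^ i) (k+1))"
    by (rule fps_compose_nth)
  also have "\<dots> = (\<Sum>n=0..k. fps_nth (?V ^ (j+1)) (n+1) * fps_nth (G ^ (n+1)) (k+1))"
    unfolding Suc_eq_plus1[symmetric]
    by (subst sum.atLeast0_atMost_Suc_shift) (simp add: fps_nth_power_0 fps_inv_0)
  finally have "(\<Sum>n\<le>k. fps_nth (?V ^ (j+1)) (n+1) * fps_nth (G ^ (n+1)) (k+1)) = fps_nth (fps_X ^ (j+1)) (k+1)"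
    using e by (simp add: atLeast0AtMost)
  then show ?thesis
    by (simp add: mult.commute fps_X_power_nth del: power_Suc)
qed

lemma Lin_Qp_Kp:
  assumes G0: "fps_nth G 0 = 0" and G1: "fps_nth G 1 \<noteq> 0"
  shows "Lin (Qp G) (Lin (Kp G) q) = q"
proof -
  have "Lin (Qp G) (Kp G k) = monom 1 k" for k
  proof (rule poly_eqI)
    fix j
    have "Lin (Qp G) (Kp G k) = (\<Sum>n\<le>k. smult (fps_nth (G ^ (n + 1)) (k + 1)) (Qp G n))"
      by (simp add: Kp_def Lin_sum Lin_monom)
    then have "coeff (Lin (Qp G) (Kp G k)) j = (\<Sum>n\<le>k. fps_nth (G ^ (n + 1)) (k + 1) * fps_nth (fps_inv G ^ (j + 1)) (n + 1))"
      by (simp add: coeff_sum coeff_Qp)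
    then show "coeff (Lin (Qp G) (Kp G k)) j = coeff (monom 1 k) j"
      using core[OF G0 G1, of k j] by (simp add: coeff_monom)
  qed
  then show ?thesis by (simp add: Lin_comp Lin_id)
qed

lemma sheffer_formula:
  assumes G0: "fps_nth G 0 = 0" and G1: "fps_nth G 1 = 1"
  shows "fps_nth (inverse (fps_X / fps_inv G - fps_const x * fps_X)) n = poly (Qp G n) x"
proof -
  define V where "V = fps_inv G"
  define W where "W = Abs_fps (\<lambda>n. fps_nth V (n+1))"
  have V0: "fps_nth V 0 = 0" by (simp add: V_def fps_inv_0)
  have VW: "V = fps_X * W" by (rule fps_ext) (auto simp: W_def V0)
  have W0: "fps_nth W 0 = 1" using fps_inv_1[OF G0 G1] by (simp add: W_def V_def)
  have WI: "W * inverse W = 1" by (rule inverse_mult_eq_1') (simp add: W0)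
  have IW: "inverse W * W = 1" by (rule inverse_mult_eq_1) (simp add: W0)
  have XW0: "fps_X * W \<noteq> 0"
  proof
    assume "fps_X * W = 0"
    then have "fps_nth (fps_X * W) 1 = 0" by simp
    then show False using W0 by simp
  qed
  have "fps_X = (fps_X * W) * inverse W" using WI by (simp add: mult.assoc)
  then have zK: "fps_X / V = inverse W"
    using XW0 VW by (metis nonzero_mult_div_cancel_left)
  define P where "P = Abs_fps (\<lambda>k. x^k)"
  have "P * (1 - fps_const x * fps_X) = P - fps_const x * (fps_X * P)"
    by (simp add: algebra_simps)
  also have "\<dots> = 1"
    by (rule fps_ext) (auto simp: P_def power_Suc[symmetric] simp del: power_Suc)
  finally have P1: "P * (1 - fps_const x * fps_X) = 1" .
  have "(P * (1 - fps_const x * fps_X)) oo V = (P oo V) * ((1 - fps_const x * fps_X) oo V)"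
    by (rule fps_compose_mult_distrib[OF V0])
  also have "(1 - fps_const x * fps_X) oo V = 1 - fps_const x * V"
    by (simp add: fps_compose_sub_distrib fps_compose_mult_distrib[OF V0] V0)
  finally have PV: "(P oo V) * (1 - fps_const x * V) = 1" using P1 by simp
  have "(inverse W - fps_const x * fps_X) * (W * (P oo V)) = (inverse W * W - fps_const x * (fps_X * W)) * (P oo V)"
    by (simp add: algebra_simps)
  also have "\<dots> = 1" using IW VW PV by (simp add: mult.commute)
  finally have inv: "inverse (fps_X / V - fps_const x * fps_X) = W * (P oo V)"
    unfolding zK by (rule fps_inverse_unique)
  have "fps_nth (W * (P oo V)) n = fps_nth (fps_X * (W * (P oo V))) (Suc n)" by simp
  also have "fps_X * (W * (P oo V)) = (fps_X * P) oo V"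
  proof -
    have "(fps_X * P) oo V = (fps_X oo V) * (P oo V)" by (rule fps_compose_mult_distrib[OF V0])
    also have "fps_X oo V = V" using V0 by simp
    finally show ?thesis by (simp add: VW mult.assoc)
  qed
  also have "fps_nth ((fps_X * P) oo V) (Suc n) = (\<Sum>i=0..Suc n. fps_nth (fps_X * P) i * fps_nth (V ^ i) (Suc n))"
    by (rule fps_compose_nth)
  also have "\<dots> = (\<Sum>j=0..n. x ^ j * fps_nth (V ^ (j+1)) (n+1))"
    by (subst sum.atLeast0_atMost_Suc_shift) (simp add: P_def)
  also have "\<dots> = poly (Qp G n) x"
    by (simp add: Qp_def poly_sum poly_monom V_def atLeast0AtMost mult.commute)
  finally show ?thesis using inv by (simp add: V_def)
qed

lemma cauchy_01:
  assumes "prob_with_moments M"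
  shows "fps_nth (cauchy_fps M) 0 = 0" "fps_nth (cauchy_fps M) 1 = 1"
proof -
  interpret prob_space M using assms by (simp add: prob_with_moments_def)
  show "fps_nth (cauchy_fps M) 0 = 0" by (simp add: cauchy_fps_def)
  show "fps_nth (cauchy_fps M) 1 = 1" by (simp add: cauchy_fps_def mom_def prob_space)
qed

lemma cauchy_return0: "cauchy_fps (return borel (0::real)) = fps_X"
proof -
  have "mom (return borel 0) n = (if n = 0 then 1 else 0)" for n
    by (simp add: mom_def integral_return)
  then have "Abs_fps (mom (return borel 0)) = 1"
    by (intro fps_ext) simp
  then show ?thesis by (simp add: cauchy_fps_def)
qed

lemma fps_inv_X: "fps_inv (fps_X :: complex fps) = fps_X"
  using fps_inv[of "fps_X :: complex fps"] by simp

lemma zK_return0: "zK_fps (return borel (0::real)) = 1"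
  by (simp add: zK_fps_def cauchy_return0 fps_inv_X)

lemma Qp_X: "Qp fps_X n = monom 1 n"
  by (rule poly_eqI) (simp add: coeff_Qp fps_inv_X fps_X_power_nth del: power_Suc)

theorem lemma2p1:
  fixes mu :: "real \<Rightarrow> real measure" and p :: "real \<Rightarrow> complex poly"
  assumes "free_conv_semigroup mu"
    and "martingale_poly mu p"
  shows "\<exists>N::nat. \<exists>c :: nat \<Rightarrow> complex. \<forall>t\<ge>0. \<forall>x::complex.
           poly (p t) x = (\<Sum>n\<le>N. c n * sheffer_Q mu n x t)"
proof (intro exI allI impI)
  fix t :: real and x :: complex
  assume t: "t \<ge> 0"
  have PM: "prob_with_moments (mu t)" and mu0: "mu 0 = return borel 0"
    using assms(1) t by (auto simp: free_conv_semigroup_def)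
  define G where "G = cauchy_fps (mu t)"
  have G0: "fps_nth G 0 = 0" and G1: "fps_nth G 1 = 1"
    using cauchy_01[OF PM] by (simp_all add: G_def)
  have SQ: "sheffer_Q mu n x t = poly (Qp G n) x" for n
    using sheffer_formula[OF G0 G1, of x n]
    by (simp add: sheffer_Q_def zK_fps_def G_def)
  have main: "p t = Lin (Qp G) (p 0)"
  proof (cases "t = 0")
    case True
    then have "G = fps_X" using mu0 by (simp add: G_def cauchy_return0)
    moreover have "Qp fps_X = (\<lambda>n. monom 1 n)" by (rule ext) (rule Qp_X)
    ultimately show ?thesis using True Lin_id[of "p 0"] by simp
  next
    case False
    then have tpos: "0 < t" using t by simp
    have u: "u_fps mu 0 t = G"
      by (simp add: u_fps_def mu0 zK_return0 G_def)
    have "Kop mu 0 t = Lin (Kp G)"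
      by (simp add: fun_eq_iff Kop_def Lin_def Kmon_def Kp_def u)
    moreover have "Kop mu 0 t (p t) = p 0"
      using assms(2) tpos by (simp add: martingale_poly_def)
    ultimately have "Lin (Kp G) (p t) = p 0" by simp
    then show ?thesis using Lin_Qp_Kp[of G "p t"] G0 G1 by simp
  qed
  show "poly (p t) x = (\<Sum>n\<le>degree (p 0). coeff (p 0) n * sheffer_Q mu n x t)"
    by (subst main) (simp add: Lin_def poly_sum SQ)
qed

end
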